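(* For every integer $n\ge 4$, the ordered pair $(Q_{n+1},AC_n)$ is a duality pair; that is, for every digraph $G$, $G\to AC_n$ if and only if $Q_{n+1}\not\to G$.
   Context: A homomorphism $G\to H$ of digraphs is a vertex map sending arcs to arcs. An ordered pair of digraphs $(G,H)$ is a duality pair if for every digraph $L$: $G\not\to L$ if and only if $L\to H$. For $n\ge 3$, $Q_n$ is the oriented path $(q_0,\dots,q_{n-1})$ on $n$ distinct vertices, with exactly one arc between $q_i$ and $q_{i+1}$ for each $i$ and no other arcs, such that: the first two arcs are $q_0\to q_1$ and $q_1\to q_2$; the subpath $(q_1,\dots,q_{n-2})$ is alternating (consecutive arcs have opposite directions); and the last two arcs (between $q_{n-3},q_{n-2}$ and between $q_{n-2},q_{n-1}$) have the same direction. For $n\ge 3$, $AC_n$ is the oriented cycle with vertices $a_0,\dots,a_{n-1}$ obtained from the path $(a_0,\dots,a_n)$ in which the arc between $a_i$ and $a_{i+1}$ is $a_i\to a_{i+1}$ if $i$ is even and $a_{i+1}\to a_i$ if $i$ is odd, by identifying $a_n$ with $a_0$. *)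

theory Defs
  imports Main
begin

definition digraph :: "'a set \<Rightarrow> ('a \<times> 'a) set \<Rightarrow> bool" where
  "digraph V A \<longleftrightarrow> A \<subseteq> V \<times> V"

definition hom :: "('a \<Rightarrow> 'b) \<Rightarrow> 'a set \<Rightarrow> ('a \<times> 'a) set \<Rightarrow> 'b set \<Rightarrow> ('b \<times> 'b) set \<Rightarrow> bool" where
  "hom f V A W B \<longleftrightarrow> (\<forall>v\<in>V. f v \<in> W) \<and> (\<forall>(u,v)\<in>A. (f u, f v) \<in> B)"

definition hom_exists :: "'a set \<Rightarrow> ('a \<times> 'a) set \<Rightarrow> 'b set \<Rightarrow> ('b \<times> 'b) set \<Rightarrow> bool" where
  "hom_exists V A W B \<longleftrightarrow> (\<exists>f. hom f V A W B)"

text \<open>Q_n: vertices 0..n-1; the arc between i and i+1 is forward (i \<rightarrow> i+1) iff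
  Q_fwd n i. Arcs 0 and 1 forward, arcs 1..n-3 alternate, arc n-2 has the
  same direction as arc n-3.\<close>

definition Q_fwd :: "nat \<Rightarrow> nat \<Rightarrow> bool" where
  "Q_fwd n i = (let j = (if i + 2 = n then n - 3 else i) in j = 0 \<or> odd j)"

definition Q_verts :: "nat \<Rightarrow> nat set" where
  "Q_verts n = {0..<n}"

definition Q_arcs :: "nat \<Rightarrow> (nat \<times> nat) set" where
  "Q_arcs n = {(i, i + 1) | i. i + 1 < n \<and> Q_fwd n i}
            \<union> {(i + 1, i) | i. i + 1 < n \<and> \<not> Q_fwd n i}"

definition AC_verts :: "nat \<Rightarrow> nat set" where
  "AC_verts n = {0..<n}"

definition AC_arcs :: "nat \<Rightarrow> (nat \<times> nat) set" where
  "AC_arcs n = {(i, (i + 1) mod n) | i. i < n \<and> even i}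
             \<union> {((i + 1) mod n, i) | i. i < n \<and> odd i}"

end

theory Submission
  imports Defs
begin

lemma AC_arc_iff: "(a,b) \<in> AC_arcs n \<longleftrightarrow> (a < n \<and> even a \<and> b = (a+1) mod n) \<or> (b < n \<and> odd b \<and> a = (b+1) mod n)"
  unfolding AC_arcs_def by blast

lemma hom_Q_iff: "hom F (Q_verts N) (Q_arcs N) V A \<longleftrightarrow> (\<forall>i<N. F i \<in> V) \<and>
   (\<forall>i. Suc i < N \<longrightarrow> (if Q_fwd N i then (F i, F (Suc i)) \<in> A else (F (Suc i), F i) \<in> A))"
  unfolding hom_def Q_verts_def Q_arcs_def by fastforce

lemma Q_fwd_eq: "n \<ge> 4 \<Longrightarrow> Q_fwd (n+1) i \<longleftrightarrow> (if i = n-1 then odd n else (i = 0 \<or> odd i))"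
  unfolding Q_fwd_def Let_def by auto

lemma AC_even: "even n \<Longrightarrow> (a,b) \<in> AC_arcs n \<Longrightarrow> even a \<and> odd b"
proof (unfold AC_arc_iff, elim disjE conjE)
  assume "even n" "a < n" "even a" "b = (a+1) mod n"
  then have "a + 1 < n" by (metis Suc_eq_plus1 Suc_lessI even_Suc)
  then show ?thesis using \<open>even a\<close> \<open>b = _\<close> by simp
next
  assume "even n" "b < n" "odd b" "a = (b+1) mod n"
  then show ?thesis
    by (cases "b + 1 = n") auto
qed

lemma AC_odd: "odd n \<Longrightarrow> (a,b) \<in> AC_arcs n \<Longrightarrow> even a \<and> a < n \<and> b < n \<and> (b = 0 \<and> a = n-1 \<or> b = a+1 \<or> a = b+1)"
proof (unfold AC_arc_iff, elim disjE conjE)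
  assume "odd n" "a < n" "even a" "b = (a+1) mod n"
  then show ?thesis by (cases "a + 1 = n") auto
next
  assume "odd n" "b < n" "odd b" "a = (b+1) mod n"
  then have "b + 1 < n" by (metis Suc_eq_plus1 Suc_lessI even_Suc)
  then show ?thesis using \<open>odd b\<close> \<open>a = _\<close> by simp
qed

lemma AC_odd_mid: "odd n \<Longrightarrow> (a,v) \<in> AC_arcs n \<Longrightarrow> (v,c) \<in> AC_arcs n \<Longrightarrow> v = 0"
  using AC_odd[of n a v] AC_odd[of n v c] by auto

lemma no_Q_AC:
  assumes n4: "n \<ge> 4" and hk: "hom k (Q_verts (n + 1)) (Q_arcs (n + 1)) (AC_verts n) (AC_arcs n)"
  shows False
proof -
  have arcs: "\<And>i. i < n \<Longrightarrow> (if Q_fwd (n+1) i then (k i, k (Suc i)) \<in> AC_arcs n else (k (Suc i), k i) \<in> AC_arcs n)"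
    using hk unfolding hom_Q_iff by auto
  have a0: "(k 0, k 1) \<in> AC_arcs n" using arcs[of 0] n4 Q_fwd_eq[OF n4, of 0] by simp
  have a1: "(k 1, k 2) \<in> AC_arcs n" proof -
    have "(1::nat) \<noteq> n - 1" using n4 by simp
    then have "Q_fwd (n+1) 1" using Q_fwd_eq[OF n4, of 1] by simp
    then show ?thesis using arcs[of 1] n4 by (simp add: numeral_2_eq_2)
  qed
  show False
  proof (cases "even n")
    case True
    then show False using AC_even[OF True a0] AC_even[OF True a1] by simp
  next
    case odd: False
    define P where "P i = (if even i then k (i+1) else if k (i+1) = 0 then n else k (i+1))" for i
    have k1: "k 1 = 0" using AC_odd_mid[OF odd a0 a1] .
    have inv: "i \<le> n - 2 \<Longrightarrow> P i \<le> i" for i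
    proof (induction i)
      case 0 then show ?case using k1 by (simp add: P_def)
    next
      case (Suc i)
      have IH: "P i \<le> i" using Suc by simp
      have si: "Suc i < n - 1" using Suc n4 by simp
      have fw: "Q_fwd (n+1) (Suc i) \<longleftrightarrow> even i" using Q_fwd_eq[OF n4, of "Suc i"] si by simp
      have ar: "if even i then (k (Suc i), k (Suc (Suc i))) \<in> AC_arcs n else (k (Suc (Suc i)), k (Suc i)) \<in> AC_arcs n"
        using arcs[of "Suc i"] si fw by (simp split: if_splits)
      show ?case
      proof (cases "even i")
        case True
        then have "(k (Suc i), k (Suc (Suc i))) \<in> AC_arcs n" using ar by simp
        from AC_odd[OF odd this] have "P (Suc i) \<le> P i + 1" using True by (auto simp: P_def)
        then show ?thesis using IH by simp
      next
        case False
        then have "(k (Suc (Suc i)), k (Suc i)) \<in> AC_arcs n" using ar by simp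
        from AC_odd[OF odd this] have "P (Suc i) \<le> P i + 1" using False by (auto simp: P_def)
        then show ?thesis using IH by simp
      qed
    qed
    have o2: "odd (n-2)" using odd n4 by simp
    have "n - 2 \<noteq> n - 1" using n4 by simp
    then have qf: "Q_fwd (n+1) (n-2)" using Q_fwd_eq[OF n4, of "n-2"] o2 by simp
    have sn: "Suc (n-2) = n-1" using n4 by simp
    have b1: "(k (n-2), k (n-1)) \<in> AC_arcs n"
      using arcs[of "n-2"] qf sn n4 by simp
    have b2: "(k (n-1), k n) \<in> AC_arcs n"
      using arcs[of "n-1"] Q_fwd_eq[OF n4, of "n-1"] n4 odd by simp
    have "k (n-1) = 0" using AC_odd_mid[OF odd b1 b2] .
    moreover have "odd (n-2)" using odd n4 by simp
    moreover have "n - 2 + 1 = n - 1" using n4 by simp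
    ultimately have "P (n-2) = n" by (simp add: P_def)
    with inv[of "n-2"] n4 show False by simp
  qed
qed


lemma even_case:
  assumes n4: "n \<ge> 4" and ev: "even n" and dg: "digraph V A"
    and noQ: "\<not> hom_exists (Q_verts (n + 1)) (Q_arcs (n + 1)) V A"
  shows "hom_exists V A (AC_verts n) (AC_arcs n)"
proof (cases "\<exists>a b c. (a,b) \<in> A \<and> (b,c) \<in> A")
  case True
  then obtain a b c where ab: "(a,b) \<in> A" and bc: "(b,c) \<in> A" by blast
  have V: "a \<in> V" "b \<in> V" "c \<in> V" using ab bc dg unfolding digraph_def by auto
  define F where "F i = (if i = 0 \<or> i = n then a else if odd i then b else c)" for i
  have "hom F (Q_verts (n+1)) (Q_arcs (n+1)) V A"
    unfolding hom_Q_iff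
  proof (intro conjI allI impI)
    fix i assume "i < n + 1" then show "F i \<in> V" using V by (simp add: F_def)
  next
    fix i assume i: "Suc i < n + 1"
    show "if Q_fwd (n+1) i then (F i, F (Suc i)) \<in> A else (F (Suc i), F i) \<in> A"
    proof (cases "i = n - 1")
      case True
      then have "\<not> Q_fwd (n+1) i" using Q_fwd_eq[OF n4, of i] ev by simp
      moreover have "Suc i = n" "odd i" "i \<noteq> 0" using True n4 ev by auto
      ultimately show ?thesis using ab by (simp add: F_def)
    next
      case False
      then have q: "Q_fwd (n+1) i \<longleftrightarrow> i = 0 \<or> odd i" using Q_fwd_eq[OF n4, of i] by simp
      have "Suc i \<noteq> n" "i \<noteq> n" using False i by auto
      then show ?thesis using q ab bc n4 by (auto simp: F_def)
    qed
  qed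
  then show ?thesis using noQ unfolding hom_exists_def by blast
next
  case False
  define f where "f v = (if \<exists>c. (v,c) \<in> A then 0 else 1::nat)" for v
  have "hom f V A (AC_verts n) (AC_arcs n)"
    unfolding hom_def
  proof (intro conjI ballI)
    fix v show "f v \<in> AC_verts n" using n4 by (simp add: f_def AC_verts_def)
  next
    fix e assume "e \<in> A"
    then obtain u v where e: "e = (u,v)" "(u,v) \<in> A" by (cases e) auto
    then have "f u = 0" "f v = 1" using False by (auto simp: f_def)
    moreover have "(0, 1) \<in> AC_arcs n" unfolding AC_arc_iff using n4 by simp
    ultimately show "case e of (u, v) \<Rightarrow> (f u, f v) \<in> AC_arcs n" using e by simp
  qed
  then show ?thesis unfolding hom_exists_def by blast
qed


definition mid :: "('a \<times> 'a) set \<Rightarrow> 'a \<Rightarrow> bool" where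
  "mid A x \<longleftrightarrow> (\<exists>a. (a,x) \<in> A) \<and> (\<exists>c. (x,c) \<in> A)"

definition walk :: "('a \<times> 'a) set \<Rightarrow> bool \<Rightarrow> nat \<Rightarrow> (nat \<Rightarrow> 'a) \<Rightarrow> bool" where
  "walk A b0 k g \<longleftrightarrow> (\<forall>i<k. if b0 = even i then (g i, g (Suc i)) \<in> A else (g (Suc i), g i) \<in> A)"

definition RR :: "('a \<times> 'a) set \<Rightarrow> bool \<Rightarrow> nat \<Rightarrow> 'a \<times> bool \<Rightarrow> bool" where
  "RR A b0 k w \<longleftrightarrow> snd w = (b0 = even k) \<and> (\<exists>g. mid A (g 0) \<and> g k = fst w \<and> walk A b0 k g)"

definition capf :: "nat \<Rightarrow> bool \<Rightarrow> 'a \<times> bool \<Rightarrow> nat" where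
  "capf n b0 w = (if snd w = b0 then n - 1 else n)"

definition SS :: "('a \<times> 'a) set \<Rightarrow> nat \<Rightarrow> bool \<Rightarrow> 'a \<times> bool \<Rightarrow> nat" where
  "SS A n b0 w = (LEAST k. RR A b0 k w \<or> k = capf n b0 w)"

lemma SS_le: "SS A n b0 w \<le> capf n b0 w"
  unfolding SS_def by (rule Least_le) simp

lemma SS_prop: "RR A b0 (SS A n b0 w) w \<or> SS A n b0 w = capf n b0 w"
  unfolding SS_def by (rule LeastI[of _ "capf n b0 w"]) simp

lemma SS_parity:
  assumes "odd n"
  shows "even (SS A n b0 w) \<longleftrightarrow> snd w = b0"
  using SS_prop[of A b0 n w] assms unfolding RR_def capf_def
  by (auto split: if_splits)

lemma RR_step:
  assumes "RR A b0 k (u,bu)" and st: "if bu then (u,v) \<in> A else (v,u) \<in> A"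
  shows "RR A b0 (Suc k) (v, \<not> bu)"
proof -
  from assms obtain g where g: "mid A (g 0)" "g k = u" "walk A b0 k g" and bu: "bu = (b0 = even k)"
    unfolding RR_def by auto
  define g' where "g' = g(Suc k := v)"
  have "walk A b0 (Suc k) g'"
    unfolding walk_def
  proof (intro allI impI)
    fix i assume "i < Suc k"
    then consider "i < k" | "i = k" by linarith
    then show "if b0 = even i then (g' i, g' (Suc i)) \<in> A else (g' (Suc i), g' i) \<in> A"
    proof cases
      case 1 then show ?thesis using g(3) unfolding walk_def g'_def by auto
    next
      case 2 then show ?thesis using st bu g(2) unfolding g'_def by (auto split: if_splits)
    qed
  qed
  moreover have "mid A (g' 0)" "g' (Suc k) = v" using g unfolding g'_def by auto
  ultimately show ?thesis using bu unfolding RR_def by auto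
qed

lemma SS_lip:
  assumes "odd n" and st: "if bu then (u,v) \<in> A else (v,u) \<in> A"
  shows "SS A n b0 (v, \<not> bu) \<le> SS A n b0 (u,bu) + 1"
proof -
  let ?k = "SS A n b0 (u,bu)"
  from SS_prop[of A b0 n "(u,bu)"] show ?thesis
  proof
    assume "RR A b0 ?k (u,bu)"
    from RR_step[OF this st] have "RR A b0 (?k + 1) (v, \<not> bu)" by simp
    then show ?thesis unfolding SS_def by (intro Least_le) simp
  next
    assume k: "?k = capf n b0 (u,bu)"
    have "capf n b0 (v, \<not> bu) \<le> capf n b0 (u,bu) + 1" unfolding capf_def by auto
    then show ?thesis using SS_le[of A n b0 "(v, \<not> bu)"] k by simp
  qed
qed

lemma SS_mid: "mid A x \<Longrightarrow> SS A n b0 (x,b0) = 0"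
proof -
  assume "mid A x"
  then have "RR A b0 0 (x,b0)" unfolding RR_def walk_def by (auto intro!: exI[of _ "\<lambda>_. x"])
  then show ?thesis unfolding SS_def by (intro Least_eq_0) simp
qed

lemma walk_ext1:
  assumes "walk A b0 k g" "k \<ge> 1"
  shows "walk A b0 (k+2) (g(Suc k := g (k-1), Suc (Suc k) := g k))"
proof -
  let ?g = "g(Suc k := g (k-1), Suc (Suc k) := g k)"
  have last: "if b0 = even (k-1) then (g (k-1), g k) \<in> A else (g k, g (k-1)) \<in> A"
  proof -
    have "k - 1 < k" and sk: "Suc (k-1) = k" using assms(2) by auto
    then have "if b0 = even (k-1) then (g (k-1), g (Suc (k-1))) \<in> A else (g (Suc (k-1)), g (k-1)) \<in> A"
      using assms(1) unfolding walk_def by blast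
    then show ?thesis unfolding sk .
  qed
  have ev: "even (k-1) \<longleftrightarrow> \<not> even k" "even (Suc k) \<longleftrightarrow> even (k-1)" using assms(2) by auto
  show ?thesis unfolding walk_def
  proof (intro allI impI)
    fix i assume "i < k + 2"
    then consider "i < k" | "i = k" | "i = Suc k" by linarith
    then show "if b0 = even i then (?g i, ?g (Suc i)) \<in> A else (?g (Suc i), ?g i) \<in> A"
    proof cases
      case 1 then show ?thesis using assms(1) unfolding walk_def by auto
    next
      case 2 then show ?thesis using last ev by (auto split: if_splits)
    next
      case 3 then show ?thesis using last ev by (auto split: if_splits)
    qed
  qed
qed

lemma walk_ext:
  assumes "walk A b0 k g" "k \<ge> 1"
  shows "\<exists>g'. g' 0 = g 0 \<and> g' (k + 2*j) = g k \<and> walk A b0 (k + 2*j) g'"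
proof (induction j)
  case 0 then show ?case using assms by auto
next
  case (Suc j)
  then obtain g' where g': "g' 0 = g 0" "g' (k + 2*j) = g k" "walk A b0 (k + 2*j) g'" by blast
  let ?h = "g'(Suc (k+2*j) := g' (k+2*j-1), Suc (Suc (k+2*j)) := g' (k+2*j))"
  have e: "k + 2 * Suc j = k + 2*j + 2" by simp
  have "walk A b0 (k + 2 * Suc j) ?h" unfolding e using walk_ext1[OF g'(3)] assms(2) by linarith
  moreover have "?h 0 = g 0" "?h (k + 2 * Suc j) = g k" using g' by auto
  ultimately show ?case by blast
qed


lemma build_Q:
  assumes n4: "n \<ge> 4" and od: "odd n" and dg: "digraph V A"
    and m0: "mid A (g 0)" and m1: "mid A (g (n-2))" and w: "walk A True (n-2) g"
  shows "hom_exists (Q_verts (n + 1)) (Q_arcs (n + 1)) V A"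
proof -
  obtain a where a: "(a, g 0) \<in> A" using m0 unfolding mid_def by blast
  obtain c where c: "(g (n-2), c) \<in> A" using m1 unfolding mid_def by blast
  have ws: "\<And>i. i < n - 2 \<Longrightarrow> (if even i then (g i, g (Suc i)) \<in> A else (g (Suc i), g i) \<in> A)"
    using w unfolding walk_def by simp
  have gV: "g j \<in> V" if "j \<le> n - 2" for j
  proof (cases "j = n - 2")
    case True then show ?thesis using c dg unfolding digraph_def by auto
  next
    case False then have "j < n - 2" using that by simp
    from ws[OF this] show ?thesis using dg unfolding digraph_def by (auto split: if_splits)
  qed
  define F where "F i = (if i = 0 then a else if i \<le> n - 1 then g (i - 1) else c)" for i
  have "hom F (Q_verts (n+1)) (Q_arcs (n+1)) V A"
    unfolding hom_Q_iff
  proof (intro conjI allI impI)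
    fix i assume "i < n + 1"
    then show "F i \<in> V" using gV a c dg unfolding F_def digraph_def by auto
  next
    fix i assume i: "Suc i < n + 1"
    show "if Q_fwd (n+1) i then (F i, F (Suc i)) \<in> A else (F (Suc i), F i) \<in> A"
    proof -
      consider "i = 0" | "i = n - 1" | "0 < i" "i < n - 1" using i by linarith
      then show ?thesis
      proof cases
        case 1
        then have "Q_fwd (n+1) i" using Q_fwd_eq[OF n4, of i] n4 by simp
        moreover have "F i = a" "F (Suc i) = g 0" using 1 n4 by (auto simp: F_def)
        ultimately show ?thesis using a by simp
      next
        case 2
        then have "Q_fwd (n+1) i" using Q_fwd_eq[OF n4, of i] od by simp
        moreover have "F i = g (n-2)" "F (Suc i) = c" using 2 n4 by (auto simp: F_def numeral_2_eq_2)
        ultimately show ?thesis using c by simp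
      next
        case 3
        then have q: "Q_fwd (n+1) i \<longleftrightarrow> odd i" using Q_fwd_eq[OF n4, of i] by simp
        have "F i = g (i - 1)" "F (Suc i) = g (Suc (i - 1))" using 3 by (auto simp: F_def)
        moreover have "i - 1 < n - 2" using 3 by simp
        moreover have "even (i - 1) \<longleftrightarrow> odd i" using 3 by auto
        ultimately show ?thesis using ws[of "i - 1"] q by (auto split: if_splits)
      qed
    qed
  qed
  then show ?thesis unfolding hom_exists_def by blast
qed

lemma SS_mid_far:
  assumes n4: "n \<ge> 4" and od: "odd n" and dg: "digraph V A"
    and noQ: "\<not> hom_exists (Q_verts (n + 1)) (Q_arcs (n + 1)) V A"
    and mx: "mid A x"
  shows "SS A n True (x, False) = n"
proof (rule ccontr)
  assume ne: "SS A n True (x, False) \<noteq> n"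
  let ?k = "SS A n True (x, False)"
  have le: "?k \<le> n" using SS_le[of A n True "(x,False)"] by (simp add: capf_def)
  have "RR A True ?k (x, False)" using SS_prop[of A True n "(x,False)"] ne by (simp add: capf_def)
  then obtain g where g: "mid A (g 0)" "g ?k = x" "walk A True ?k g" and ok: "odd ?k"
    unfolding RR_def by auto
  have k1: "?k \<ge> 1" using ok by (cases ?k) auto
  have k2: "?k \<le> n - 2" using le ne ok od by (auto elim!: oddE)
  obtain j where j: "n - 2 = ?k + 2 * j"
  proof
    show "n - 2 = ?k + 2 * ((n - 2 - ?k) div 2)" using k2 ok od n4 by (auto elim!: oddE)
  qed
  obtain g' where g': "g' 0 = g 0" "g' (?k + 2*j) = g ?k" "walk A True (?k + 2*j) g'"
    using walk_ext[OF g(3) k1] by blast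
  have "hom_exists (Q_verts (n + 1)) (Q_arcs (n + 1)) V A"
    apply (rule build_Q[OF n4 od dg, of g'])
    using g g' j mx by auto
  then show False using noQ by simp
qed


lemma odd_case:
  assumes n4: "n \<ge> 4" and od: "odd n" and dg: "digraph V A"
    and noQ: "\<not> hom_exists (Q_verts (n + 1)) (Q_arcs (n + 1)) V A"
  shows "hom_exists V A (AC_verts n) (AC_arcs n)"
proof -
  define p where "p w = min (SS A n True w) (n - SS A n False w)" for w
  define f where "f v = (if \<exists>c. (v,c) \<in> A then p (v,True) else if \<exists>a. (a,v) \<in> A then p (v,False) mod n else 0)" for v
  have arcp: "even (p (u,True)) \<and> p (u,True) \<le> n - 1 \<and> p (v,False) \<le> n \<and>
     (p (v,False) = p (u,True) + 1 \<or> p (u,True) = p (v,False) + 1)" if uv: "(u,v) \<in> A" for u v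
  proof -
    have st1: "if True then (u,v) \<in> A else (v,u) \<in> A" using uv by simp
    have st2: "if False then (v,u) \<in> A else (u,v) \<in> A" using uv by simp
    have a1: "SS A n True (v,False) \<le> SS A n True (u,True) + 1" using SS_lip[OF od st1] by simp
    have a2: "SS A n True (u,True) \<le> SS A n True (v,False) + 1" using SS_lip[OF od st2] by simp
    have a3: "SS A n False (v,False) \<le> SS A n False (u,True) + 1" using SS_lip[OF od st1] by simp
    have a4: "SS A n False (u,True) \<le> SS A n False (v,False) + 1" using SS_lip[OF od st2] by simp
    have c1: "SS A n True (u,True) \<le> n - 1" "SS A n True (v,False) \<le> n"
       "SS A n False (u,True) \<le> n" "SS A n False (v,False) \<le> n - 1"
      using SS_le[of A n True "(u,True)"] SS_le[of A n True "(v,False)"]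
        SS_le[of A n False "(u,True)"] SS_le[of A n False "(v,False)"] by (auto simp: capf_def)
    have e: "even (SS A n True (u,True))" "odd (SS A n True (v,False))"
       "odd (SS A n False (u,True))" "even (SS A n False (v,False))"
      using SS_parity[OF od, of A] by auto
    have ev1: "even (n - SS A n False (u,True))" using e(3) c1(3) od by (auto elim!: oddE)
    have ev2: "odd (n - SS A n False (v,False))" using e(4) c1(4) od n4 by (auto elim!: oddE)
    have pe: "even (p (u,True))" unfolding p_def using e(1) ev1 by (simp add: min_def)
    have po: "odd (p (v,False))" unfolding p_def using e(2) ev2 by (simp add: min_def)
    have ne: "p (u,True) \<noteq> p (v,False)" using pe po by auto
    have "p (u,True) \<le> p (v,False) + 1" "p (v,False) \<le> p (u,True) + 1"
      unfolding p_def using a1 a2 a3 a4 c1 by (auto simp: min_def)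
    then show ?thesis using ne pe c1 unfolding p_def by (auto simp: min_def)
  qed
  have midp: "p (v,True) = 0 \<and> p (v,False) = n" if "mid A v" for v
  proof -
    have "SS A n True (v,True) = 0" "SS A n False (v,False) = 0" using SS_mid[OF that] by auto
    moreover have "SS A n True (v,False) = n" using SS_mid_far[OF n4 od dg noQ that] .
    ultimately show ?thesis unfolding p_def by simp
  qed
  have "hom f V A (AC_verts n) (AC_arcs n)"
    unfolding hom_def
  proof (intro conjI ballI)
    fix v
    have "p (v,True) < n"
      using SS_le[of A n True "(v,True)"] n4 unfolding p_def capf_def by simp
    then show "f v \<in> AC_verts n" using n4 by (simp add: f_def AC_verts_def)
  next
    fix e assume "e \<in> A"
    then obtain u v where e: "e = (u,v)" and uv: "(u,v) \<in> A" by (cases e) auto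
    have fu: "f u = p (u,True)" using uv by (auto simp: f_def)
    note ap = arcp[OF uv]
    have last: "(n - 1, 0) \<in> AC_arcs n" unfolding AC_arc_iff using od n4 by simp
    have "(f u, f v) \<in> AC_arcs n"
    proof (cases "\<exists>c. (v,c) \<in> A")
      case True
      then have m: "mid A v" using uv unfolding mid_def by blast
      have "f v = 0" using True midp[OF m] by (simp add: f_def)
      moreover have "p (u,True) = n - 1" using midp[OF m] ap by auto
      ultimately show ?thesis using fu last by simp
    next
      case False
      then have fv: "f v = p (v,False) mod n" using uv by (auto simp: f_def)
      show ?thesis
      proof (cases "p (v,False) = n")
        case True
        then have "p (u,True) = n - 1" using ap by auto
        then show ?thesis using fu fv True last by simp
      next
        case False
        then have lt: "p (v,False) < n" using ap by simp
        then have fv': "f v = p (v,False)" using fv by simp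
        from ap show ?thesis
        proof (elim conjE disjE)
          assume "p (v,False) = p (u,True) + 1" "even (p (u,True))" "p (u, True) \<le> n - 1"
          then show ?thesis unfolding AC_arc_iff fu fv' using lt by simp
        next
          assume h: "p (u,True) = p (v,False) + 1" "even (p (u,True))" "p (u, True) \<le> n - 1"
          then have "odd (p (v,False))" by simp
          then show ?thesis unfolding AC_arc_iff fu fv' using lt h n4 by simp
        qed
      qed
    qed
    then show "case e of (u, v) \<Rightarrow> (f u, f v) \<in> AC_arcs n" using e by simp
  qed
  then show ?thesis unfolding hom_exists_def by blast
qed

theorem mainTheorem8:
  fixes n :: nat and V :: "'a set" and A :: "('a \<times> 'a) set"
  assumes "n \<ge> 4" and "finite V" and "digraph V A"
  shows "hom_exists V A (AC_verts n) (AC_arcs n)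
           \<longleftrightarrow> \<not> hom_exists (Q_verts (n + 1)) (Q_arcs (n + 1)) V A"
proof
  assume "hom_exists V A (AC_verts n) (AC_arcs n)"
  then obtain h where h: "hom h V A (AC_verts n) (AC_arcs n)" unfolding hom_exists_def by blast
  show "\<not> hom_exists (Q_verts (n + 1)) (Q_arcs (n + 1)) V A"
  proof
    assume "hom_exists (Q_verts (n + 1)) (Q_arcs (n + 1)) V A"
    then obtain f where f: "hom f (Q_verts (n + 1)) (Q_arcs (n + 1)) V A" unfolding hom_exists_def by blast
    have "hom (h \<circ> f) (Q_verts (n + 1)) (Q_arcs (n + 1)) (AC_verts n) (AC_arcs n)"
      using f h unfolding hom_def by fastforce
    then show False using no_Q_AC[OF assms(1)] by blast
  qed
next
  assume noQ: "\<not> hom_exists (Q_verts (n + 1)) (Q_arcs (n + 1)) V A"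
  show "hom_exists V A (AC_verts n) (AC_arcs n)"
  proof (cases "even n")
    case True then show ?thesis using even_case[OF assms(1) True assms(3) noQ] by blast
  next
    case False then show ?thesis using odd_case[OF assms(1) _ assms(3) noQ] by simp
  qed
qed

end
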